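(* Let $T$ be a finite rooted tree, and let $\mathcal{H}(T)$ be the hypergraph on $V(T)$ whose hyperedges are, for each leaf $\ell$, the set of ancestors of $\ell$ (including $\ell$ itself). Then $\mathcal{H}(T)$ can be realized with the family $\mathcal{R}_{\rm SW}$ of all south-west quadrants: there is an injective map $\pi\colon V(T) \to \mathbb{R}^2$ such that for every leaf $\ell$ there is a south-west quadrant $Q$ with $\pi(V(T)) \cap Q$ equal to the image of the set of ancestors of $\ell$ (including $\ell$). Moreover, this can be done so that the root is the bottommost and leftmost point, and the children of each non-leaf vertex lie on a common line of slope $-1$.
   Context: South-west quadrants: $\mathcal{R}_{\rm SW} = \{\{(x,y) \in \mathbb{R}^2 : x \leq a,\ y \leq b\} : a,b \in \mathbb{R}\}$. *)

theory Defs
  imports Complex_Main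
begin

text \<open>A finite rooted tree is given by a finite vertex set V, a root r in V and a
parent function par, such that every non-root vertex has its parent in V and
iterating par from any vertex reaches the root (so there are no cycles).\<close>

definition rooted_tree :: "'a set \<Rightarrow> 'a \<Rightarrow> ('a \<Rightarrow> 'a) \<Rightarrow> bool" where
  "rooted_tree V r par \<longleftrightarrow> finite V \<and> r \<in> V \<and>
     (\<forall>v \<in> V - {r}. par v \<in> V) \<and>
     (\<forall>v \<in> V. \<exists>n. (par ^^ n) v = r)"

definition children :: "'a set \<Rightarrow> 'a \<Rightarrow> ('a \<Rightarrow> 'a) \<Rightarrow> 'a \<Rightarrow> 'a set" where
  "children V r par v = {w \<in> V - {r}. par w = v}"

definition is_leaf :: "'a set \<Rightarrow> 'a \<Rightarrow> ('a \<Rightarrow> 'a) \<Rightarrow> 'a \<Rightarrow> bool" where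
  "is_leaf V r par v \<longleftrightarrow> v \<in> V \<and> children V r par v = {}"

text \<open>Ancestors of v, including v itself and the root: the vertices on the
parent chain from v up to (and including) the root.\<close>
definition ancestors :: "'a \<Rightarrow> ('a \<Rightarrow> 'a) \<Rightarrow> 'a \<Rightarrow> 'a set" where
  "ancestors r par v = {(par ^^ k) v | k. \<forall>j<k. (par ^^ j) v \<noteq> r}"

definition sw_quadrant :: "real \<Rightarrow> real \<Rightarrow> (real \<times> real) set" where
  "sw_quadrant a b = {p. fst p \<le> a \<and> snd p \<le> b}"

end

theory Submission
  imports Defs
begin

lemma digits_lt:
  assumes "\<forall>i<n. f i < (B::nat)"
  shows "(\<Sum>i<n. f i * B^i) < B^n"
  using assms
proof (induction n)
  case 0 then show ?case by simp
next
  case (Suc n)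
  have "(\<Sum>i<Suc n. f i * B^i) = (\<Sum>i<n. f i * B^i) + f n * B^n" by simp
  also have "\<dots> < B^n + f n * B^n" using Suc by simp
  also have "\<dots> = (f n + 1) * B^n" by simp
  also have "\<dots> \<le> B * B^n" using Suc.prems by (intro mult_right_mono) auto
  finally show ?case by simp
qed

lemma digits_lex:
  assumes "\<forall>i<n. f i < (B::nat)" "\<forall>i<n. g i < B" "p < n"
    "\<forall>i. p < i \<and> i < n \<longrightarrow> f i = g i" "g p < f p"
  shows "(\<Sum>i<n. g i * B^i) < (\<Sum>i<n. f i * B^i)"
  using assms
proof (induction n)
  case 0 then show ?case by simp
next
  case (Suc n)
  show ?case
  proof (cases "p = n")
    case True
    have "(\<Sum>i<Suc n. g i * B^i) = (\<Sum>i<n. g i * B^i) + g n * B^n" by simp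
    also have "\<dots> < B^n + g n * B^n" using Suc.prems digits_lt[of n g B] by simp
    also have "\<dots> = (g n + 1) * B^n" by simp
    also have "\<dots> \<le> f n * B^n" using Suc.prems True by (intro mult_right_mono) auto
    also have "\<dots> \<le> (\<Sum>i<Suc n. f i * B^i)" by simp
    finally show ?thesis .
  next
    case False
    then have "p < n" "f n = g n" using Suc.prems by auto
    then have "(\<Sum>i<n. g i * B^i) < (\<Sum>i<n. f i * B^i)"
      using Suc by auto
    then show ?thesis using \<open>f n = g n\<close> by simp
  qed
qed

locale rt =
  fixes V :: "'a set" and r :: 'a and par :: "'a \<Rightarrow> 'a"
  assumes tree: "rooted_tree V r par"
begin

lemma fin: "finite V" and rootV: "r \<in> V"
  and parV: "v \<in> V \<Longrightarrow> v \<noteq> r \<Longrightarrow> par v \<in> V"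
  and reach: "v \<in> V \<Longrightarrow> \<exists>n. (par^^n) v = r"
  using tree unfolding rooted_tree_def by auto

definition d where "d v = (LEAST n. (par^^n) v = r)"

lemma d_reach: "v \<in> V \<Longrightarrow> (par^^d v) v = r"
  unfolding d_def using reach by (rule LeastI_ex)

lemma d_min: "k < d v \<Longrightarrow> (par^^k) v \<noteq> r"
  unfolding d_def using not_less_Least by blast

lemma d_r: "d r = 0"
  unfolding d_def by (rule Least_eq_0) simp

lemma d_pos: "v \<in> V \<Longrightarrow> v \<noteq> r \<Longrightarrow> 0 < d v"
  using d_reach[of v] by (cases "d v") auto

lemma iter_in: "v \<in> V \<Longrightarrow> k \<le> d v \<Longrightarrow> (par^^k) v \<in> V"
proof (induction k)
  case 0 then show ?case by simp
next
  case (Suc k)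
  then have "(par^^k) v \<in> V" "(par^^k) v \<noteq> r" using d_min by auto
  then show ?case using parV by simp
qed

lemma d_par: assumes "v \<in> V" "v \<noteq> r" shows "d (par v) = d v - 1"
proof -
  have pos: "0 < d v" using d_pos assms by auto
  show ?thesis unfolding d_def[of "par v"]
  proof (rule Least_equality)
    have "(par^^(d v - 1)) (par v) = (par^^(Suc (d v - 1))) v"
      by (simp only: funpow_Suc_right comp_def)
    also have "Suc (d v - 1) = d v" using pos by simp
    finally show "(par^^(d v - 1)) (par v) = r" using d_reach assms by simp
  next
    fix y assume "(par^^y) (par v) = r"
    then have "(par^^(Suc y)) v = r" by (simp only: funpow_Suc_right comp_def)
    then have "\<not> Suc y < d v" using d_min by blast
    then show "d v - 1 \<le> y" by simp
  qed
qed

lemma d_iter: "v \<in> V \<Longrightarrow> k \<le> d v \<Longrightarrow> d ((par^^k) v) = d v - k"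
proof (induction k)
  case 0 then show ?case by simp
next
  case (Suc k)
  then have "(par^^k) v \<in> V" "(par^^k) v \<noteq> r" using d_min iter_in by auto
  then show ?case using Suc d_par by simp
qed

definition anc where "anc v j = (par^^(d v - j)) v"

lemma anc_in: "v \<in> V \<Longrightarrow> anc v j \<in> V"
  unfolding anc_def by (rule iter_in) auto

lemma d_anc: "v \<in> V \<Longrightarrow> j \<le> d v \<Longrightarrow> d (anc v j) = j"
  unfolding anc_def by (subst d_iter) auto

lemma anc_self: "anc v (d v) = v" unfolding anc_def by simp

lemma anc_0: "v \<in> V \<Longrightarrow> anc v 0 = r" unfolding anc_def using d_reach by simp

lemma anc_anc: assumes "v \<in> V" "k \<le> d v" "j \<le> d v - k"
  shows "anc ((par^^k) v) j = anc v j"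
proof -
  have "anc ((par^^k) v) j = (par^^(d v - k - j)) ((par^^k) v)"
    unfolding anc_def using d_iter assms by simp
  also have "\<dots> = (par^^(d v - k - j + k)) v" by (simp add: funpow_add)
  also have "d v - k - j + k = d v - j" using assms by simp
  finally show ?thesis unfolding anc_def .
qed

lemma anc_mono: assumes "v \<in> V" "j \<le> j'" "j' \<le> d v"
  shows "anc (anc v j') j = anc v j"
  unfolding anc_def[of v j'] using anc_anc[of v "d v - j'" j] assms by simp

lemma ancestors_eq: assumes "v \<in> V"
  shows "ancestors r par v = {(par^^k) v | k. k \<le> d v}"
proof -
  have "(\<forall>j<k. (par^^j) v \<noteq> r) \<longleftrightarrow> k \<le> d v" for k
  proof
    assume "\<forall>j<k. (par^^j) v \<noteq> r"
    then show "k \<le> d v" using d_reach[OF assms] by (metis not_le)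
  next
    assume "k \<le> d v" then show "\<forall>j<k. (par^^j) v \<noteq> r" using d_min by auto
  qed
  then show ?thesis unfolding ancestors_def by auto
qed


definition N where "N = card V"
definition B where "B = N + 2"
definition K where "K = Max (d ` V)"
definition idx where "idx v = (SOME h. bij_betw h V {0..<card V}) v + 1"

lemma idx_props: "inj_on idx V" "v \<in> V \<Longrightarrow> 1 \<le> idx v \<and> idx v \<le> N"
proof -
  obtain h where h: "bij_betw h V {0..<card V}" using ex_bij_betw_finite_nat fin by blast
  then have hs: "bij_betw (SOME h. bij_betw h V {0..<card V}) V {0..<card V}"
    using someI[of "\<lambda>h. bij_betw h V {0..<card V}" h] by blast
  show "inj_on idx V" using hs unfolding idx_def bij_betw_def inj_on_def by auto
  show "v \<in> V \<Longrightarrow> 1 \<le> idx v \<and> idx v \<le> N"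
    using bij_betwE[OF hs] unfolding idx_def N_def by force
qed

lemma d_le_K: "v \<in> V \<Longrightarrow> d v \<le> K"
  unfolding K_def using fin by auto

definition A where "A v j = (if 1 \<le> j \<and> j \<le> d v then idx (anc v j) else 0)"
definition C where "C v j = (if 1 \<le> j \<and> j \<le> d v then N + 1 - idx (anc v j) else 0)"
definition X where "X v = (\<Sum>p<K. A v (K - p) * B^p)"
definition Y where "Y v = (\<Sum>p<K. C v (K - p) * B^p)"

lemma idx_anc: "v \<in> V \<Longrightarrow> 1 \<le> idx (anc v j) \<and> idx (anc v j) \<le> N"
  using idx_props(2)[OF anc_in[of v j]] by simp
lemma A_lt: "v \<in> V \<Longrightarrow> A v j < B"
  using idx_anc[of v j] unfolding A_def B_def by auto
lemma C_lt: "v \<in> V \<Longrightarrow> C v j < B"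
  using idx_anc[of v j] unfolding C_def B_def by auto

lemma AC_sum: "v \<in> V \<Longrightarrow> A v j + C v j = (if 1 \<le> j \<and> j \<le> d v then N + 1 else 0)"
  using idx_anc[of v j] unfolding A_def C_def by auto

lemma XY_sum: "v \<in> V \<Longrightarrow> X v + Y v = (\<Sum>p<K. (if 1 \<le> K - p \<and> K - p \<le> d v then N + 1 else 0) * B^p)"
  unfolding X_def Y_def sum.distrib[symmetric]
  by (rule sum.cong) (simp_all only: add_mult_distrib[symmetric] AC_sum)

lemma anc_le: assumes "l \<in> V" "k \<le> d l"
  shows "X ((par^^k) l) \<le> X l" "Y ((par^^k) l) \<le> Y l"
proof -
  let ?u = "(par^^k) l"
  have du: "d ?u = d l - k" using d_iter assms by simp
  have eq: "anc ?u j = anc l j" if "j \<le> d ?u" for j using anc_anc assms that du by simp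
  show "X ?u \<le> X l" unfolding X_def
    by (rule sum_mono, rule mult_right_mono) (auto simp: A_def eq du)
  show "Y ?u \<le> Y l" unfolding Y_def
    by (rule sum_mono, rule mult_right_mono) (auto simp: C_def eq du)
qed

lemma key: assumes w: "w \<in> V" and l: "l \<in> V" and le: "X w \<le> X l" "Y w \<le> Y l"
  shows "\<exists>k \<le> d l. w = (par^^k) l"
proof (rule ccontr)
  assume nk: "\<not> ?thesis"
  define S where "S = {j. j \<le> min (d w) (d l) \<and> anc w j \<noteq> anc l j}"
  have Kw: "d w \<le> K" and Kl: "d l \<le> K" using d_le_K w l by auto
  show False
  proof (cases "S = {}")
    case True
    then have eqa: "j \<le> min (d w) (d l) \<Longrightarrow> anc w j = anc l j" for j unfolding S_def by auto
    show False
    proof (cases "d w \<le> d l")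
      case True
      then have "w = anc l (d w)" using eqa[of "d w"] anc_self[of w] by simp
      then have "w = (par^^(d l - d w)) l" unfolding anc_def .
      then show False using nk by auto
    next
      case False
      let ?p = "K - (d l + 1)"
      have "X l < X w" unfolding X_def
      proof (rule digits_lex)
        show "\<forall>i<K. A w (K - i) < B" "\<forall>i<K. A l (K - i) < B" using A_lt w l by auto
        show "?p < K" using False Kw by simp
        show "\<forall>i. ?p < i \<and> i < K \<longrightarrow> A w (K - i) = A l (K - i)"
          using False by (auto simp: A_def eqa)
        have "K - ?p = d l + 1" using False Kw by simp
        then show "A l (K - ?p) < A w (K - ?p)"
          using False idx_anc[OF w, of "d l + 1"] by (auto simp: A_def)
      qed
      then show False using le by simp
    qed
  next
    case False
    define j where "j = Min S"
    have finS: "finite S" unfolding S_def by auto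
    have jS: "j \<in> S" using False finS j_def by auto
    have jle: "j \<le> d w" "j \<le> d l" "anc w j \<noteq> anc l j" using jS S_def by auto
    have below: "anc w i = anc l i" if "i < j" for i
    proof (rule ccontr)
      assume "anc w i \<noteq> anc l i"
      then have "i \<in> S" using that jle unfolding S_def by auto
      then have "j \<le> i" using Min_le[OF finS] j_def by blast
      then show False using that by simp
    qed
    have j1: "1 \<le> j" using jle(3) anc_0 w l by (cases j) auto
    have idxne: "idx (anc w j) \<noteq> idx (anc l j)"
      using jle(3) idx_props(1) anc_in w l unfolding inj_on_def by blast
    let ?p = "K - j"
    have pK: "?p < K" "K - ?p = j" using j1 jle Kw by auto
    show False
    proof (cases "idx (anc l j) < idx (anc w j)")
      case True
      have "X l < X w" unfolding X_def
      proof (rule digits_lex)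
        show "\<forall>i<K. A w (K - i) < B" "\<forall>i<K. A l (K - i) < B" using A_lt w l by auto
        show "?p < K" using pK by simp
        show "\<forall>i. ?p < i \<and> i < K \<longrightarrow> A w (K - i) = A l (K - i)"
          using jle by (auto simp: A_def below)
        show "A l (K - ?p) < A w (K - ?p)"
          using True pK jle j1 by (auto simp: A_def)
      qed
      then show False using le by simp
    next
      case False
      then have lt: "idx (anc w j) < idx (anc l j)" using idxne by simp
      have "Y l < Y w" unfolding Y_def
      proof (rule digits_lex)
        show "\<forall>i<K. C w (K - i) < B" "\<forall>i<K. C l (K - i) < B" using C_lt w l by auto
        show "?p < K" using pK by simp
        show "\<forall>i. ?p < i \<and> i < K \<longrightarrow> C w (K - i) = C l (K - i)"
          using jle by (auto simp: C_def below)
        show "C l (K - ?p) < C w (K - ?p)"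
          using lt pK jle j1 idx_anc[OF l, of j] by (auto simp: C_def)
      qed
      then show False using le by simp
    qed
  qed
qed


lemma root_lt: assumes v: "v \<in> V" "v \<noteq> r" shows "X r < X v" "Y r < Y v"
proof -
  have dv: "1 \<le> d v" "d v \<le> K" using d_pos v d_le_K by (auto simp: Suc_le_eq)
  have pK: "K - 1 < K" "K - (K - 1) = 1" using dv by auto
  show "X r < X v" unfolding X_def
  proof (rule digits_lex)
    show "\<forall>i<K. A v (K - i) < B" "\<forall>i<K. A r (K - i) < B" using A_lt v rootV by auto
    show "K - 1 < K" using pK by simp
    show "\<forall>i. K - 1 < i \<and> i < K \<longrightarrow> A v (K - i) = A r (K - i)" by auto
    show "A r (K - (K - 1)) < A v (K - (K - 1))"
      using pK dv idx_anc[OF v(1), of 1] by (auto simp: A_def d_r)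
  qed
  show "Y r < Y v" unfolding Y_def
  proof (rule digits_lex)
    show "\<forall>i<K. C v (K - i) < B" "\<forall>i<K. C r (K - i) < B" using C_lt v rootV by auto
    show "K - 1 < K" using pK by simp
    show "\<forall>i. K - 1 < i \<and> i < K \<longrightarrow> C v (K - i) = C r (K - i)" by auto
    show "C r (K - (K - 1)) < C v (K - (K - 1))"
      using pK dv idx_anc[OF v(1), of 1] by (auto simp: C_def d_r)
  qed
qed

lemma main:
  "\<exists>\<pi> :: 'a \<Rightarrow> real \<times> real.
           inj_on \<pi> V \<and>
           (\<forall>l. is_leaf V r par l \<longrightarrow>
              (\<exists>a b. \<pi> ` V \<inter> sw_quadrant a b = \<pi> ` ancestors r par l)) \<and>
           (\<forall>v \<in> V - {r}. fst (\<pi> r) < fst (\<pi> v) \<and> snd (\<pi> r) < snd (\<pi> v)) \<and>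
           (\<forall>v \<in> V. children V r par v \<noteq> {} \<longrightarrow>
              (\<exists>c. \<forall>w \<in> children V r par v. fst (\<pi> w) + snd (\<pi> w) = c))"
proof (intro exI conjI)
  let ?\<pi> = "\<lambda>v. (real (X v), real (Y v))"
  show "inj_on ?\<pi> V"
  proof (rule inj_onI)
    fix w l assume w: "w \<in> V" and l: "l \<in> V" and eq: "?\<pi> w = ?\<pi> l"
    then have e: "X w = X l" "Y w = Y l" by auto
    obtain k where k: "k \<le> d l" "w = (par^^k) l" using key[OF w l] e by auto
    obtain k' where k': "k' \<le> d w" "l = (par^^k') w" using key[OF l w] e by auto
    have "d w = d l - k" using k d_iter l by simp
    moreover have "d l = d w - k'" using k' d_iter w by simp
    ultimately have "k = 0" using k by simp
    then show "w = l" using k by simp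
  qed
  show "\<forall>l. is_leaf V r par l \<longrightarrow>
      (\<exists>a b. ?\<pi> ` V \<inter> sw_quadrant a b = ?\<pi> ` ancestors r par l)"
  proof (intro allI impI exI)
    fix l assume "is_leaf V r par l"
    then have l: "l \<in> V" unfolding is_leaf_def by simp
    show "?\<pi> ` V \<inter> sw_quadrant (real (X l)) (real (Y l)) = ?\<pi> ` ancestors r par l"
    proof
      show "?\<pi> ` V \<inter> sw_quadrant (real (X l)) (real (Y l)) \<subseteq> ?\<pi> ` ancestors r par l"
      proof
        fix z assume "z \<in> ?\<pi> ` V \<inter> sw_quadrant (real (X l)) (real (Y l))"
        then obtain w where w: "w \<in> V" "z = ?\<pi> w" "X w \<le> X l" "Y w \<le> Y l"
          unfolding sw_quadrant_def by auto
        then obtain k where "k \<le> d l" "w = (par^^k) l" using key[OF w(1) l] by auto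
        then have "w \<in> ancestors r par l" using ancestors_eq[OF l] by auto
        then show "z \<in> ?\<pi> ` ancestors r par l" using w by auto
      qed
      show "?\<pi> ` ancestors r par l \<subseteq> ?\<pi> ` V \<inter> sw_quadrant (real (X l)) (real (Y l))"
      proof
        fix z assume "z \<in> ?\<pi> ` ancestors r par l"
        then obtain k where k: "k \<le> d l" "z = ?\<pi> ((par^^k) l)"
          using ancestors_eq[OF l] by auto
        have "(par^^k) l \<in> V" using iter_in l k by simp
        then show "z \<in> ?\<pi> ` V \<inter> sw_quadrant (real (X l)) (real (Y l))"
          using k anc_le[OF l k(1)] unfolding sw_quadrant_def by auto
      qed
    qed
  qed
  show "\<forall>v \<in> V - {r}. fst (?\<pi> r) < fst (?\<pi> v) \<and> snd (?\<pi> r) < snd (?\<pi> v)"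
    using root_lt by auto
  show "\<forall>v \<in> V. children V r par v \<noteq> {} \<longrightarrow>
              (\<exists>c. \<forall>w \<in> children V r par v. fst (?\<pi> w) + snd (?\<pi> w) = c)"
  proof (intro ballI impI exI)
    fix v w assume v: "v \<in> V" and w: "w \<in> children V r par v"
    then have w': "w \<in> V" "w \<noteq> r" "par w = v" unfolding children_def by auto
    have "d v = d w - 1" using d_par[OF w'(1,2)] w' by simp
    moreover have "0 < d w" using d_pos w' by simp
    ultimately have dw: "d w = d v + 1" by simp
    have "fst (?\<pi> w) + snd (?\<pi> w) = real (X w + Y w)" by simp
    also have "\<dots> = real (\<Sum>p<K. (if 1 \<le> K - p \<and> K - p \<le> d v + 1 then N + 1 else 0) * B^p)"
      using XY_sum[OF w'(1)] dw by simp
    finally show "fst (?\<pi> w) + snd (?\<pi> w) =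
       real (\<Sum>p<K. (if 1 \<le> K - p \<and> K - p \<le> d v + 1 then N + 1 else 0) * B^p)" .
  qed
qed

end

theorem lemma4:
  fixes V :: "'a set" and r :: 'a and par :: "'a \<Rightarrow> 'a"
  assumes "rooted_tree V r par"
  shows "\<exists>\<pi> :: 'a \<Rightarrow> real \<times> real.
           inj_on \<pi> V \<and>
           (\<forall>l. is_leaf V r par l \<longrightarrow>
              (\<exists>a b. \<pi> ` V \<inter> sw_quadrant a b = \<pi> ` ancestors r par l)) \<and>
           (\<forall>v \<in> V - {r}. fst (\<pi> r) < fst (\<pi> v) \<and> snd (\<pi> r) < snd (\<pi> v)) \<and>
           (\<forall>v \<in> V. children V r par v \<noteq> {} \<longrightarrow>
              (\<exists>c. \<forall>w \<in> children V r par v. fst (\<pi> w) + snd (\<pi> w) = c))"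
  using rt.main[OF rt.intro[OF assms]] .

end
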